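(* Let $f\colon\mathbb{N}\to\mathbb{C}$ be multiplicative and let $x\ge1$ be such that $F_1(x)>0$. Then $$\mathbb{E}[U_x^2]=\sum_{\substack{n_1,n_2\le x\\ \gcd(n_1,n_2)=1}}\frac{1}{\max\{n_1,n_2\}^2}\Bigg|\sum_{g_1\mid n_1^\infty,\ g_2\mid n_2^\infty}\frac{\overline{f(g_1)}f(g_1n_1)f(g_2)\overline{f(g_2n_2)}}{g_1g_2}\,S_1\big(x,n_1n_2,\max\{n_1,n_2\}g_1g_2\big)\Bigg|^2.$$
   Context: Multiplicative: $f(1)=1$ and $f(nm)=f(n)f(m)$ for coprime $n,m$. $g\mid n^\infty$ means $g$ ranges over positive integers all of whose prime factors divide $n$. $\alpha$ is a Steinhaus random multiplicative function ($(\alpha(p))_p$ i.i.d. uniform on the unit circle, $\alpha(n)=\prod_p\alpha(p)^{a_p}$). For $m\in\mathbb{N}$ and $y>0$, $F_m(y):=\sum_{h\le y,\,\gcd(h,m)=1}|f(h)|^2(\tfrac1h-\tfrac1y)$ (an empty sum is $0$), and $S_1(x,m,d):=F_m(x/d)/F_1(x)$. $s_t:=t^{-1/2}\sum_{n\le t}\alpha(n)f(n)$ and $U_x:=F_1(x)^{-1}\int_1^x\frac{|s_t|^2}{t}dt$. *)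

theory Defs
  imports "HOL-Probability.Probability" "HOL-Computational_Algebra.Primes"
begin

definition multiplicative :: "(nat \<Rightarrow> complex) \<Rightarrow> bool" where
  "multiplicative f \<longleftrightarrow> f 1 = 1 \<and> (\<forall>n m. coprime n m \<longrightarrow> f (n * m) = f n * f m)"

definition divides_pow_inf :: "nat \<Rightarrow> nat \<Rightarrow> bool" where
  "divides_pow_inf g n \<longleftrightarrow> g > 0 \<and> (\<forall>p. prime p \<longrightarrow> p dvd g \<longrightarrow> p dvd n)"

definition circle_unif :: "complex measure" where
  "circle_unif = distr (uniform_measure lborel {0..<2*pi}) borel (\<lambda>t. cis t)"

text \<open>Probability space of a Steinhaus random multiplicative function: coordinate p
  of the sample point is alpha(p) (only prime coordinates are used).\<close>
definition steinhaus :: "(nat \<Rightarrow> complex) measure" where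
  "steinhaus = PiM UNIV (\<lambda>_::nat. circle_unif)"

definition alpha :: "(nat \<Rightarrow> complex) \<Rightarrow> nat \<Rightarrow> complex" where
  "alpha \<omega> n = (\<Prod>p\<in>prime_factors n. \<omega> p ^ multiplicity p n)"

definition Fm :: "(nat \<Rightarrow> complex) \<Rightarrow> nat \<Rightarrow> real \<Rightarrow> real" where
  "Fm f m y = (\<Sum>h\<in>{h::nat. 1 \<le> h \<and> real h \<le> y \<and> coprime h m}.
                 (cmod (f h))^2 * (1 / real h - 1 / y))"

definition S1 :: "(nat \<Rightarrow> complex) \<Rightarrow> real \<Rightarrow> nat \<Rightarrow> nat \<Rightarrow> real" where
  "S1 f x m d = Fm f m (x / real d) / Fm f 1 x"

definition s_t :: "(nat \<Rightarrow> complex) \<Rightarrow> (nat \<Rightarrow> complex) \<Rightarrow> real \<Rightarrow> complex" where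
  "s_t f \<omega> t = of_real (t powr (-1/2)) * (\<Sum>n\<in>{1..nat \<lfloor>t\<rfloor>}. alpha \<omega> n * f n)"

definition U_x :: "(nat \<Rightarrow> complex) \<Rightarrow> real \<Rightarrow> (nat \<Rightarrow> complex) \<Rightarrow> real" where
  "U_x f x \<omega> = set_lebesgue_integral lborel {1..x} (\<lambda>t. (cmod (s_t f \<omega> t))^2 / t) / Fm f 1 x"

end

theory Submission
  imports Defs
begin






lemma cis_borel: "cis \<in> borel_measurable borel"
  by (intro borel_measurable_continuous_onI continuous_intros)
lemma cis_meas: "cis \<in> borel_measurable (uniform_measure lborel {0..<2*pi})"
proof -
  have "sets (uniform_measure lborel {0..<2*pi}) = sets borel" by simp
  from measurable_cong_sets[OF this refl, of borel] cis_borel show ?thesis by simp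
qed

lemma mom_borel: "(\<lambda>z::complex. z ^ a * cnj z ^ b) \<in> borel_measurable borel"
  by (intro borel_measurable_continuous_onI continuous_intros)

lemma circle_prob: "prob_space circle_unif"
  unfolding circle_unif_def
  by (intro prob_space.prob_space_distr prob_space_uniform_measure cis_meas) auto

lemma e: "1/ennreal(2*pi) = ennreal(1/(2*pi))"
    using divide_ennreal[of 1 "2*pi"] by simp
  lemma em: "emeasure lborel {0..<2*pi} = ennreal (2*pi)"
    by (simp add: emeasure_lborel_Ico)
  lemma pw: "indicator {0..<2*pi} x / emeasure lborel {0..<2*pi} = ennreal (indicator {0..<2*pi} x / (2*pi))" for x :: real
    unfolding em by (cases "x \<in> {0..<2*pi}") (simp_all add: e)
lemma unif_density: "uniform_measure lborel {0..<2*pi} =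
   density lborel (\<lambda>t. ennreal (indicator {0..<2*pi} t / (2*pi)))"
    unfolding uniform_measure_def pw by (rule refl)

lemma sc: "(1/(c::real)) *\<^sub>R (I::complex) = I / of_real c"
  by (simp add: scaleR_conv_of_real divide_inverse mult.commute of_real_inverse)

lemma circle_integral:
  fixes h :: "complex \<Rightarrow> complex"
  assumes h: "h \<in> borel_measurable borel"
  shows "integral\<^sup>L circle_unif h =
     integral\<^sup>L lborel (\<lambda>t. indicator {0..2*pi} t *\<^sub>R h (cis t)) / (2*pi)"
proof -
  have "integral\<^sup>L circle_unif h = integral\<^sup>L (uniform_measure lborel {0..<2*pi}) (\<lambda>t. h (cis t))"
    unfolding circle_unif_def by (rule integral_distr[OF cis_meas h])
  also have "\<dots> = integral\<^sup>L lborel (\<lambda>t. (indicator {0..<2*pi} t / (2*pi)) *\<^sub>R h (cis t))"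
    unfolding unif_density
  proof (rule integral_density)
    show "(\<lambda>t. h (cis t)) \<in> borel_measurable lborel"
      using measurable_compose[OF cis_borel h] by (simp add: measurable_lborel1)
    show "(\<lambda>t. indicator {0..<2 * pi} t / (2 * pi)) \<in> borel_measurable lborel" by simp
    show "AE x in lborel. 0 \<le> indicator {0..<2 * pi} x / (2 * pi)" by simp
  qed
  also have "\<dots> = integral\<^sup>L lborel (\<lambda>t. (1/(2*pi)) *\<^sub>R (indicator {0..2*pi} t *\<^sub>R h (cis t)))"
  proof (rule integral_cong_AE)
    show "AE x in lborel. (indicator {0..<2 * pi} x / (2 * pi)) *\<^sub>R h (cis x) =
        (1/(2*pi)) *\<^sub>R (indicator {0..2 * pi} x *\<^sub>R h (cis x))"
      using AE_lborel_singleton[of "2*pi"]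
      by eventually_elim (auto split: split_indicator)
  next
    have m: "(\<lambda>t. h (cis t)) \<in> borel_measurable lborel"
      using measurable_compose[OF cis_borel h] by (simp add: measurable_lborel1)
    show "(\<lambda>x. (indicator {0..<2 * pi} x / (2 * pi)) *\<^sub>R h (cis x)) \<in> borel_measurable lborel"
      using m by measurable
    show "(\<lambda>x. (1/(2*pi)) *\<^sub>R (indicator {0..2 * pi} x *\<^sub>R h (cis x))) \<in> borel_measurable lborel"
      using m by measurable
  qed
  also have "\<dots> = integral\<^sup>L lborel (\<lambda>t. indicator {0..2*pi} t *\<^sub>R h (cis t)) / (2*pi)"
    by (subst integral_scaleR_right) (rule sc)
  finally show ?thesis .
qed

lemma cis_pow_cnj: "cis (t::real) ^ (a::nat) * cnj (cis t) ^ (b::nat) = cis ((real a - real b) * t)"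
proof -
  have 1: "cis t ^ a = cis (real a * t)" by (rule Complex.DeMoivre)
  have 2: "cnj (cis t) ^ b = cis (real b * (-t))" unfolding cis_cnj by (rule Complex.DeMoivre)
  have 3: "real a * t + real b * - t = (real a - real b) * t" by (simp add: algebra_simps)
  show ?thesis unfolding 1 2 cis_mult 3 by (rule refl)
qed

lemma circle_moment_integrable:
  "integrable circle_unif (\<lambda>z. z ^ a * cnj z ^ b)"
proof -
  interpret U: prob_space "uniform_measure lborel {0..<2*pi}"
    by (intro prob_space_uniform_measure) auto
  have "integrable (uniform_measure lborel {0..<2*pi}) (\<lambda>t. cis t ^ a * cnj (cis t) ^ b)"
  proof (rule U.integrable_const_bound[where B=1])
    show "AE x in uniform_measure lborel {0..<2 * pi}. norm (cis x ^ a * cnj (cis x) ^ b) \<le> 1"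
      by (simp add: norm_mult norm_power)
    show "(\<lambda>t. cis t ^ a * cnj (cis t) ^ b) \<in> borel_measurable (uniform_measure lborel {0..<2 * pi})"
      by (rule measurable_compose[OF cis_meas mom_borel])
  qed
  then show ?thesis unfolding circle_unif_def
    by (subst integrable_distr_eq[OF cis_meas mom_borel])
qed

lemma circle_moment:
  "integral\<^sup>L circle_unif (\<lambda>z. z ^ a * cnj z ^ b) = (if a = b then 1 else 0)"
proof -
  define k where "k = real a - real b"
  have "integral\<^sup>L circle_unif (\<lambda>z. z ^ a * cnj z ^ b) =
     integral\<^sup>L lborel (\<lambda>t. indicator {0..2*pi} t *\<^sub>R cis (k * t)) / (2*pi)"
    by (subst circle_integral[OF mom_borel]) (simp only: cis_pow_cnj k_def)
  also have "\<dots> = (if a = b then 1 else 0)"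
  proof (cases "a = b")
    case True
    then have "integral\<^sup>L lborel (\<lambda>t. indicator {0..2*pi} t *\<^sub>R cis (k * t)) = (\<lambda>t. of_real t) (2*pi) - (\<lambda>t. of_real t) 0"
      by (intro integral_FTC_atLeastAtMost) (auto simp: k_def intro!: derivative_eq_intros)
    with True show ?thesis by simp
  next
    case False
    then have k: "k \<noteq> 0" by (simp add: k_def)
    define F where "F t = cis (k * t) / (\<i> * of_real k)" for t
    have D: "(F has_vector_derivative cis (k * t)) (at t within S)" for t S
    proof -
      have "((\<lambda>t. cis (k * t)) has_derivative (\<lambda>s. s *\<^sub>R (\<i> * of_real k * cis (k * t)))) (at t within S)"
        by (rule has_derivative_eq_rhs, rule has_derivative_cis, auto intro!: derivative_eq_intros simp: fun_eq_iff scaleR_conv_of_real algebra_simps)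
      then have "((\<lambda>t. cis (k * t)) has_vector_derivative (\<i> * of_real k * cis (k * t))) (at t within S)"
        by (simp add: has_vector_derivative_def)
      then have "((\<lambda>t. cis (k * t) / (\<i> * of_real k)) has_vector_derivative (\<i> * of_real k * cis (k * t)) / (\<i> * of_real k)) (at t within S)"
        by (rule has_vector_derivative_divide)
      then show ?thesis using k unfolding F_def[abs_def] by simp
    qed
    have "integral\<^sup>L lborel (\<lambda>t. indicator {0..2*pi} t *\<^sub>R cis (k * t)) = F (2*pi) - F 0"
      by (intro integral_FTC_atLeastAtMost D) (auto intro!: continuous_intros)
    also have "\<dots> = 0"
    proof -
      have "cis (k * (2*pi)) = 1"
      proof -
        have "k * (2*pi) = 2 * pi * of_int (int a - int b)" by (simp add: k_def)
        moreover have "cis (2 * pi * of_int (int a - int b)) = 1"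
          by (rule cis_multiple_2pi) (rule Ints_of_int)
        ultimately show ?thesis by (simp only:)
      qed
      then show ?thesis unfolding F_def by (simp only: mult_zero_right cis_zero diff_self)
    qed
    finally show ?thesis using False by (simp only: if_False div_0)
  qed
  finally show ?thesis .
qed

lemma stein_pps: "product_prob_space (\<lambda>_::nat. circle_unif)"
proof -
  interpret C: prob_space circle_unif by (rule circle_prob)
  show ?thesis
    by unfold_locales
qed

lemma prod_indicator_all:
  assumes "finite Q"
  shows "(\<Prod>p\<in>Q. (if a p = b p then 1 else 0 :: complex)) = (if \<forall>p\<in>Q. a p = b p then 1 else 0)"
proof (cases "\<forall>p\<in>Q. a p = b p")
  case True then show ?thesis by simp
next
  case False
  then obtain p where "p \<in> Q" "a p \<noteq> b p" by blast
  then show ?thesis using assms False by (simp add: prod_zero_iff)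
qed

lemma stein_prod:
  fixes Q :: "nat set" and a b :: "nat \<Rightarrow> nat"
  assumes Q: "finite Q"
  shows "integrable steinhaus (\<lambda>\<omega>. \<Prod>p\<in>Q. \<omega> p ^ a p * cnj (\<omega> p) ^ b p)"
    and "integral\<^sup>L steinhaus (\<lambda>\<omega>. \<Prod>p\<in>Q. \<omega> p ^ a p * cnj (\<omega> p) ^ b p) =
          (if \<forall>p\<in>Q. a p = b p then 1 else 0)"
proof -
  interpret P: product_prob_space "\<lambda>_::nat. circle_unif" UNIV by (rule stein_pps)
  define G where "G y = (\<Prod>p\<in>Q. y p ^ a p * cnj (y p) ^ b p)" for y :: "nat \<Rightarrow> complex"
  have intG: "integrable (PiM Q (\<lambda>_. circle_unif)) G"
    unfolding G_def by (rule P.product_integrable_prod[OF Q circle_moment_integrable])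
  have GI: "integral\<^sup>L (PiM Q (\<lambda>_. circle_unif)) G = (\<Prod>p\<in>Q. (if a p = b p then 1 else 0))"
    unfolding G_def by (subst P.product_integral_prod[OF Q circle_moment_integrable]) (simp add: circle_moment)
  have mG: "G \<in> borel_measurable (PiM Q (\<lambda>_. circle_unif))"
    using intG by (rule borel_measurable_integrable)
  have mr: "(\<lambda>x. restrict x Q) \<in> measurable (PiM UNIV (\<lambda>_. circle_unif)) (PiM Q (\<lambda>_. circle_unif))"
    by (rule measurable_restrict_subset) simp
  have D: "distr (PiM UNIV (\<lambda>_. circle_unif)) (PiM Q (\<lambda>_. circle_unif)) (\<lambda>x. restrict x Q) = PiM Q (\<lambda>_. circle_unif)"
    by (rule P.distr_PiM_restrict_finite[OF Q]) simp
  have eq: "G (restrict \<omega> Q) = (\<Prod>p\<in>Q. \<omega> p ^ a p * cnj (\<omega> p) ^ b p)" for \<omega>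
    unfolding G_def by (rule prod.cong) auto
  have "integrable (PiM UNIV (\<lambda>_. circle_unif)) (\<lambda>x. G (restrict x Q))"
    using integrable_distr_eq[OF mr mG] intG D by simp
  then show "integrable steinhaus (\<lambda>\<omega>. \<Prod>p\<in>Q. \<omega> p ^ a p * cnj (\<omega> p) ^ b p)"
    unfolding steinhaus_def eq .
  have "integral\<^sup>L (PiM UNIV (\<lambda>_. circle_unif)) (\<lambda>x. G (restrict x Q)) = integral\<^sup>L (PiM Q (\<lambda>_. circle_unif)) G"
    using integral_distr[OF mr mG] D by simp
  then show "integral\<^sup>L steinhaus (\<lambda>\<omega>. \<Prod>p\<in>Q. \<omega> p ^ a p * cnj (\<omega> p) ^ b p) =
          (if \<forall>p\<in>Q. a p = b p then 1 else 0)"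
    unfolding steinhaus_def eq GI prod_indicator_all[OF Q] .
qed


lemma alpha_Q:
  assumes n: "n > 0" and Q: "finite Q" "prime_factors n \<subseteq> Q" "\<forall>p\<in>Q. prime p"
  shows "alpha \<omega> n = (\<Prod>p\<in>Q. \<omega> p ^ multiplicity p n)"
  unfolding alpha_def
proof (rule prod.mono_neutral_left[OF Q(1) Q(2)])
  show "\<forall>p\<in>Q - prime_factors n. \<omega> p ^ multiplicity p n = 1"
  proof
    fix p assume p: "p \<in> Q - prime_factors n"
    then have "\<not> p dvd n" using Q(3) n by (auto simp: in_prime_factors_iff)
    then show "\<omega> p ^ multiplicity p n = 1" by (simp add: not_dvd_imp_multiplicity_0)
  qed
qed

lemma alpha_four:
  fixes n m n' m' :: nat
  assumes pos: "n > 0" "m > 0" "n' > 0" "m' > 0"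
  defines "Q \<equiv> prime_factors (n * m * n' * m')"
  shows "alpha \<omega> n * cnj (alpha \<omega> m) * cnj (alpha \<omega> n') * alpha \<omega> m' =
    (\<Prod>p\<in>Q. \<omega> p ^ (multiplicity p n + multiplicity p m') * cnj (\<omega> p) ^ (multiplicity p m + multiplicity p n'))"
proof -
  have fQ: "finite Q" and pQ: "\<forall>p\<in>Q. prime p" unfolding Q_def by auto
  have sub: "prime_factors k \<subseteq> Q" if "k dvd n * m * n' * m'" for k
    unfolding Q_def using that pos by (intro dvd_prime_factors) auto
  have A: "alpha \<omega> k = (\<Prod>p\<in>Q. \<omega> p ^ multiplicity p k)" if "k > 0" "k dvd n * m * n' * m'" for k
    using alpha_Q[OF that(1) fQ sub[OF that(2)] pQ] .
  have "alpha \<omega> n * cnj (alpha \<omega> m) * cnj (alpha \<omega> n') * alpha \<omega> m' =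
     (\<Prod>p\<in>Q. \<omega> p ^ multiplicity p n) * (\<Prod>p\<in>Q. cnj (\<omega> p) ^ multiplicity p m) *
     (\<Prod>p\<in>Q. cnj (\<omega> p) ^ multiplicity p n') * (\<Prod>p\<in>Q. \<omega> p ^ multiplicity p m')"
    using pos by (simp add: A)
  also have "\<dots> = (\<Prod>p\<in>Q. \<omega> p ^ (multiplicity p n + multiplicity p m') * cnj (\<omega> p) ^ (multiplicity p m + multiplicity p n'))"
    by (simp add: power_add prod.distrib mult_ac)
  finally show ?thesis .
qed

lemma mult_eq_iff_mult:
  fixes n m n' m' :: nat
  assumes pos: "n > 0" "m > 0" "n' > 0" "m' > 0"
  shows "(\<forall>p\<in>prime_factors (n * m * n' * m'). multiplicity p n + multiplicity p m' = multiplicity p m + multiplicity p n')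
     \<longleftrightarrow> n * m' = m * n'"
proof
  assume H: "\<forall>p\<in>prime_factors (n * m * n' * m'). multiplicity p n + multiplicity p m' = multiplicity p m + multiplicity p n'"
  show "n * m' = m * n'"
  proof (rule multiplicity_eq_nat)
    fix p :: nat assume p: "prime p"
    show "multiplicity p (n * m') = multiplicity p (m * n')"
    proof (cases "p \<in> prime_factors (n * m * n' * m')")
      case True
      then show ?thesis using H pos p by (simp add: prime_elem_multiplicity_mult_distrib)
    next
      case False
      then have "\<not> p dvd n * m * n' * m'" using p pos by (auto simp: in_prime_factors_iff)
      then have "\<not> p dvd n * m'" "\<not> p dvd m * n'"
        by (metis dvd_mult dvd_mult2 mult.assoc mult.commute)+
      then show ?thesis by (simp add: not_dvd_imp_multiplicity_0)
    qed
  qed (use pos in auto)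
next
  assume E: "n * m' = m * n'"
  show "\<forall>p\<in>prime_factors (n * m * n' * m'). multiplicity p n + multiplicity p m' = multiplicity p m + multiplicity p n'"
  proof
    fix p assume "p \<in> prime_factors (n * m * n' * m')"
    then have p: "prime p" by auto
    have "multiplicity p (n * m') = multiplicity p (m * n')" by (simp add: E)
    then show "multiplicity p n + multiplicity p m' = multiplicity p m + multiplicity p n'"
      using p pos by (simp add: prime_elem_multiplicity_mult_distrib)
  qed
qed

lemma alpha_moment:
  fixes n m n' m' :: nat
  assumes pos: "n > 0" "m > 0" "n' > 0" "m' > 0"
  shows "integrable steinhaus (\<lambda>\<omega>. alpha \<omega> n * cnj (alpha \<omega> m) * cnj (alpha \<omega> n') * alpha \<omega> m')"
    and "integral\<^sup>L steinhaus (\<lambda>\<omega>. alpha \<omega> n * cnj (alpha \<omega> m) * cnj (alpha \<omega> n') * alpha \<omega> m') =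
          (if n * m' = m * n' then 1 else 0)"
  unfolding alpha_four[OF pos]
  using stein_prod[of "prime_factors (n * m * n' * m')" "\<lambda>p. multiplicity p n + multiplicity p m'" "\<lambda>p. multiplicity p m + multiplicity p n'"]
    mult_eq_iff_mult[OF pos] by auto



lemma inv_sq_integral:
  fixes M x :: real
  assumes "1 \<le> M" "M \<le> x"
  shows "integrable lborel (\<lambda>t. indicator {M..x} t *\<^sub>R (1 / t^2))"
    and "integral\<^sup>L lborel (\<lambda>t. indicator {M..x} t *\<^sub>R (1 / t^2)) = 1 / M - 1 / x"
proof -
  have c: "continuous_on {M..x} (\<lambda>t::real. 1 / t^2)"
    using assms by (intro continuous_intros) auto
  show "integrable lborel (\<lambda>t. indicator {M..x} t *\<^sub>R (1 / t^2))"
    using borel_integrable_atLeastAtMost'[OF c] unfolding set_integrable_def .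
  have "integral\<^sup>L lborel (\<lambda>t. indicator {M..x} t *\<^sub>R (1 / t^2)) = (\<lambda>t. - 1 / t) x - (\<lambda>t. - 1 / t) M"
  proof (rule integral_FTC_atLeastAtMost[OF assms(2) _ c])
    fix t assume t: "M \<le> t" "t \<le> x"
    then have "t \<noteq> 0" using assms by auto
    then show "((\<lambda>t. - 1 / t) has_vector_derivative 1 / t^2) (at t within {M..x})"
      by (auto intro!: derivative_eq_intros simp: has_real_derivative_iff_has_vector_derivative[symmetric] power2_eq_square)
  qed
  then show "integral\<^sup>L lborel (\<lambda>t. indicator {M..x} t *\<^sub>R (1 / t^2)) = 1 / M - 1 / x" by simp
qed

lemma le_floor_nat_iff: "0 \<le> t \<Longrightarrow> n \<le> nat \<lfloor>t\<rfloor> \<longleftrightarrow> real n \<le> t"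
  by (simp add: le_nat_iff le_floor_iff)

lemma st_pointwise:
  fixes f :: "nat \<Rightarrow> complex" and x t :: real
  assumes t: "1 \<le> t" "t \<le> x"
  defines "N \<equiv> nat \<lfloor>x\<rfloor>"
  shows "(cmod (s_t f \<omega> t))^2 / t =
    (\<Sum>n\<in>{1..N}. \<Sum>m\<in>{1..N}. Re (alpha \<omega> n * f n * cnj (alpha \<omega> m * f m)) *
        (indicator {real (max n m)..x} t *\<^sub>R (1 / t^2)))"
proof -
  define b where "b n = alpha \<omega> n * f n" for n
  define A where "A = {1..nat \<lfloor>t\<rfloor>}"
  define S where "S = (\<Sum>n\<in>A. b n)"
  have A: "A = {n\<in>{1..N}. real n \<le> t}"
    unfolding A_def N_def using t
    by (auto simp: le_floor_nat_iff)
  have "(cmod (s_t f \<omega> t))^2 = (t powr (-1/2))^2 * (cmod S)^2"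
    unfolding s_t_def S_def b_def A_def using t by (simp add: norm_mult power_mult_distrib)
  also have "(t powr (-1/2))^2 = 1 / t"
  proof -
    have "(t powr (-1/2))^2 = t powr (-1/2) * t powr (-1/2)" by (simp only: power2_eq_square)
    also have "\<dots> = t powr (-1/2 + -1/2)" by (simp only: powr_add[symmetric])
    also have "-1/2 + -1/2 = (-1::real)" by simp
    also have "t powr (-1) = 1 / t" using t by (simp add: powr_minus_divide)
    finally show ?thesis .
  qed
  also have "(cmod S)^2 = Re (S * cnj S)"
    using complex_norm_square[of S] by (metis Re_complex_of_real)
  also have "S * cnj S = (\<Sum>n\<in>A. \<Sum>m\<in>A. b n * cnj (b m))"
    unfolding S_def by (simp add: sum_product)
  finally have 1: "(cmod (s_t f \<omega> t))^2 / t = (\<Sum>n\<in>A. \<Sum>m\<in>A. Re (b n * cnj (b m))) / t^2"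
    using t by (simp add: power2_eq_square)
  have 2: "(\<Sum>n\<in>A. \<Sum>m\<in>A. Re (b n * cnj (b m))) =
     (\<Sum>n\<in>{1..N}. \<Sum>m\<in>{1..N}. if real (max n m) \<le> t then Re (b n * cnj (b m)) else 0)"
  proof -
    define R where "R n m = Re (b n * cnj (b m))" for n m
    have "(\<Sum>n\<in>A. \<Sum>m\<in>A. R n m) = (\<Sum>n\<in>{1..N}. if real n \<le> t then (\<Sum>m\<in>{1..N}. if real m \<le> t then R n m else 0) else 0)"
      unfolding A by (simp only: sum.inter_filter[OF finite_atLeastAtMost])
    also have "\<dots> = (\<Sum>n\<in>{1..N}. \<Sum>m\<in>{1..N}. if real n \<le> t then (if real m \<le> t then R n m else 0) else 0)"
      by (intro sum.cong refl) simp
    also have "\<dots> = (\<Sum>n\<in>{1..N}. \<Sum>m\<in>{1..N}. if real (max n m) \<le> t then R n m else 0)"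
      by (intro sum.cong refl) (simp add: of_nat_max)
    finally show ?thesis unfolding R_def .
  qed
  have 3: "(if real (max n m) \<le> t then Re (b n * cnj (b m)) else 0) / t^2 =
      Re (b n * cnj (b m)) * (indicator {real (max n m)..x} t *\<^sub>R (1 / t^2))" for n m
    using t by (cases "real (max n m) \<le> t") (simp_all add: indicator_def)
  show ?thesis
    unfolding 1 2 sum_divide_distrib 3 by (simp only: b_def)
qed


lemma Ux_integral:
  fixes f :: "nat \<Rightarrow> complex" and x :: real
  assumes x: "1 \<le> x"
  defines "N \<equiv> nat \<lfloor>x\<rfloor>"
  shows "set_lebesgue_integral lborel {1..x} (\<lambda>t. (cmod (s_t f \<omega> t))^2 / t) =
    (\<Sum>n\<in>{1..N}. \<Sum>m\<in>{1..N}. Re (alpha \<omega> n * f n * cnj (alpha \<omega> m * f m)) *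
        (1 / real (max n m) - 1 / x))"
proof -
  define R where "R n m = Re (alpha \<omega> n * f n * cnj (alpha \<omega> m * f m))" for n m
  have bnd: "1 \<le> real (max n m)" "real (max n m) \<le> x" if "n \<in> {1..N}" "m \<in> {1..N}" for n m
  proof -
    show "1 \<le> real (max n m)" using that by auto
    have "max n m \<le> N" using that by auto
    then show "real (max n m) \<le> x" unfolding N_def using x by (simp add: le_floor_nat_iff of_nat_max)
  qed
  have "set_lebesgue_integral lborel {1..x} (\<lambda>t. (cmod (s_t f \<omega> t))^2 / t) =
     integral\<^sup>L lborel (\<lambda>t. \<Sum>n\<in>{1..N}. \<Sum>m\<in>{1..N}. R n m * (indicator {real (max n m)..x} t *\<^sub>R (1 / t^2)))"
    unfolding set_lebesgue_integral_def
  proof (rule Bochner_Integration.integral_cong[OF refl])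
    fix t :: real
    show "indicator {1..x} t *\<^sub>R ((cmod (s_t f \<omega> t))^2 / t) =
      (\<Sum>n\<in>{1..N}. \<Sum>m\<in>{1..N}. R n m * (indicator {real (max n m)..x} t *\<^sub>R (1 / t^2)))"
    proof (cases "t \<in> {1..x}")
      case True
      then show ?thesis using st_pointwise[of t x f \<omega>] unfolding R_def N_def by simp
    next
      case False
      have "indicator {real (max n m)..x} t = (0::real)" if "n \<in> {1..N}" "m \<in> {1..N}" for n m
        using False bnd[OF that] by (auto simp: indicator_def)
      then show ?thesis using False by simp
    qed
  qed
  also have "\<dots> = (\<Sum>n\<in>{1..N}. \<Sum>m\<in>{1..N}. R n m * integral\<^sup>L lborel (\<lambda>t. indicator {real (max n m)..x} t *\<^sub>R (1 / t^2)))"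
  proof -
    define g where "g n m t = indicator {real (max n m)..x} t *\<^sub>R (1 / t^2)" for n m and t :: real
    have ig: "integrable lborel (\<lambda>t. R n m * g n m t)" if "n \<in> {1..N}" "m \<in> {1..N}" for n m
      unfolding g_def by (rule integrable_mult_right, rule inv_sq_integral(1)[OF bnd[OF that]])
    have "integral\<^sup>L lborel (\<lambda>t. \<Sum>n\<in>{1..N}. \<Sum>m\<in>{1..N}. R n m * g n m t) =
      (\<Sum>n\<in>{1..N}. integral\<^sup>L lborel (\<lambda>t. \<Sum>m\<in>{1..N}. R n m * g n m t))"
      by (rule Bochner_Integration.integral_sum, rule Bochner_Integration.integrable_sum, rule ig)
    also have "\<dots> = (\<Sum>n\<in>{1..N}. \<Sum>m\<in>{1..N}. integral\<^sup>L lborel (\<lambda>t. R n m * g n m t))"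
      by (intro sum.cong refl Bochner_Integration.integral_sum ig)
    also have "\<dots> = (\<Sum>n\<in>{1..N}. \<Sum>m\<in>{1..N}. R n m * integral\<^sup>L lborel (g n m))"
      by (simp only: integral_mult_right_zero)
    finally show ?thesis unfolding g_def .
  qed
  also have "\<dots> = (\<Sum>n\<in>{1..N}. \<Sum>m\<in>{1..N}. R n m * (1 / real (max n m) - 1 / x))"
    using inv_sq_integral(2)[OF bnd] by simp
  finally show ?thesis unfolding R_def .
qed



lemma Z_real:
  fixes A :: "nat \<Rightarrow> nat \<Rightarrow> complex" and P :: "nat set"
  assumes "\<And>n m. A m n = cnj (A n m)"
  shows "of_real (\<Sum>n\<in>P. \<Sum>m\<in>P. Re (A n m)) = (\<Sum>n\<in>P. \<Sum>m\<in>P. A n m)"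
proof -
  define Z where "Z = (\<Sum>n\<in>P. \<Sum>m\<in>P. A n m)"
  have c: "cnj (A n m) = A m n" for n m using assms[of m n] by (rule sym)
  have "cnj Z = (\<Sum>n\<in>P. \<Sum>m\<in>P. A m n)" unfolding Z_def cnj_sum c ..
  also have "\<dots> = Z" unfolding Z_def by (rule sum.swap)
  finally have "Z \<in> \<real>" by (simp add: Reals_cnj_iff)
  then have "of_real (Re Z) = Z" by (simp add: complex_is_Real_iff complex_eq_iff)
  then show ?thesis unfolding Z_def by simp
qed

lemma sum_prod4:
  fixes a b :: "nat \<Rightarrow> nat \<Rightarrow> complex"
  shows "(\<Sum>i\<in>P. \<Sum>j\<in>P. a i j) * (\<Sum>k\<in>P. \<Sum>l\<in>P. b k l) = (\<Sum>i\<in>P. \<Sum>j\<in>P. \<Sum>k\<in>P. \<Sum>l\<in>P. a i j * b k l)"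
proof -
  define B where "B = (\<Sum>k\<in>P. \<Sum>l\<in>P. b k l)"
  have "(\<Sum>i\<in>P. \<Sum>j\<in>P. a i j) * B = (\<Sum>i\<in>P. \<Sum>j\<in>P. a i j * B)"
    by (simp only: sum_distrib_right)
  also have "\<dots> = (\<Sum>i\<in>P. \<Sum>j\<in>P. \<Sum>k\<in>P. \<Sum>l\<in>P. a i j * b k l)"
    unfolding B_def by (simp only: sum_distrib_left)
  finally show ?thesis unfolding B_def .
qed

lemma EU2:
  fixes f :: "nat \<Rightarrow> complex" and x :: real
  assumes x: "1 \<le> x" and F: "Fm f 1 x > 0"
  defines "P \<equiv> {1..nat \<lfloor>x\<rfloor>}"
  defines "u \<equiv> (\<lambda>n m. f n * cnj (f m) * of_real (1 / real (max n m) - 1 / x))"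
  shows "of_real (integral\<^sup>L steinhaus (\<lambda>\<omega>. (U_x f x \<omega>)^2)) =
     (\<Sum>n\<in>P. \<Sum>m\<in>P. \<Sum>n'\<in>P. \<Sum>m'\<in>P. u n m * cnj (u n' m') * (if n * m' = m * n' then 1 else 0))
       / of_real ((Fm f 1 x)^2)"
proof -
  define F where "F = Fm f 1 x"
  define al where "al \<omega> n m n' m' = alpha \<omega> n * cnj (alpha \<omega> m) * cnj (alpha \<omega> n') * alpha \<omega> m'" for \<omega> n m n' m'
  define A where "A \<omega> n m = alpha \<omega> n * f n * cnj (alpha \<omega> m * f m) * of_real (1 / real (max n m) - 1 / x)" for \<omega> n m
  have ReA: "Re (A \<omega> n m) = Re (alpha \<omega> n * f n * cnj (alpha \<omega> m * f m)) * (1 / real (max n m) - 1 / x)" for \<omega> n m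
    unfolding A_def by simp
  have symA: "A \<omega> m n = cnj (A \<omega> n m)" for \<omega> n m
    unfolding A_def by (simp add: max.commute mult_ac)
  have pw: "of_real ((U_x f x \<omega>)^2) =
     (\<Sum>n\<in>P. \<Sum>m\<in>P. \<Sum>n'\<in>P. \<Sum>m'\<in>P. al \<omega> n m n' m' * (u n m * cnj (u n' m'))) / of_real (F^2)" for \<omega>
  proof -
    define Z where "Z = (\<Sum>n\<in>P. \<Sum>m\<in>P. A \<omega> n m)"
    have U: "U_x f x \<omega> = (\<Sum>n\<in>P. \<Sum>m\<in>P. Re (A \<omega> n m)) / F"
      unfolding U_x_def F_def P_def ReA using Ux_integral[OF x] by simp
    have Z: "of_real (\<Sum>n\<in>P. \<Sum>m\<in>P. Re (A \<omega> n m)) = Z"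
      unfolding Z_def by (rule Z_real) (rule symA)
    have "cnj Z = Z"
      using Z by (metis complex_cnj_complex_of_real)
    have "of_real ((U_x f x \<omega>)^2) = Z * cnj Z / of_real (F^2)"
      unfolding U using Z \<open>cnj Z = Z\<close> by (simp add: power_divide power2_eq_square)
    also have "Z * cnj Z = (\<Sum>n\<in>P. \<Sum>m\<in>P. \<Sum>n'\<in>P. \<Sum>m'\<in>P. A \<omega> n m * cnj (A \<omega> n' m'))"
      unfolding Z_def cnj_sum by (rule sum_prod4)
    also have "\<dots> = (\<Sum>n\<in>P. \<Sum>m\<in>P. \<Sum>n'\<in>P. \<Sum>m'\<in>P. al \<omega> n m n' m' * (u n m * cnj (u n' m')))"
      unfolding A_def al_def u_def by (intro sum.cong refl) (simp add: mult_ac)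
    finally show ?thesis .
  qed
  have Fne: "F \<noteq> 0" using F unfolding F_def by simp
  have int: "integrable steinhaus (\<lambda>\<omega>. al \<omega> n m n' m' * c)"
    if "n \<in> P" "m \<in> P" "n' \<in> P" "m' \<in> P" for n m n' m' c
    unfolding al_def using that unfolding P_def
    by (intro integrable_mult_left alpha_moment(1)) auto
  have "(of_real (integral\<^sup>L steinhaus (\<lambda>\<omega>. (U_x f x \<omega>)^2)) :: complex) =
       integral\<^sup>L steinhaus (\<lambda>\<omega>. of_real ((U_x f x \<omega>)^2))"
    by (rule integral_complex_of_real[symmetric])
  also have "\<dots> = integral\<^sup>L steinhaus (\<lambda>\<omega>. (\<Sum>n\<in>P. \<Sum>m\<in>P. \<Sum>n'\<in>P. \<Sum>m'\<in>P. al \<omega> n m n' m' * (u n m * cnj (u n' m')))) / of_real (F^2)"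
    unfolding pw by (rule integral_divide_zero)
  also have "integral\<^sup>L steinhaus (\<lambda>\<omega>. (\<Sum>n\<in>P. \<Sum>m\<in>P. \<Sum>n'\<in>P. \<Sum>m'\<in>P. al \<omega> n m n' m' * (u n m * cnj (u n' m')))) =
     (\<Sum>n\<in>P. \<Sum>m\<in>P. \<Sum>n'\<in>P. \<Sum>m'\<in>P. integral\<^sup>L steinhaus (\<lambda>\<omega>. al \<omega> n m n' m' * (u n m * cnj (u n' m'))))"
  proof -
    have "integral\<^sup>L steinhaus (\<lambda>\<omega>. (\<Sum>n\<in>P. \<Sum>m\<in>P. \<Sum>n'\<in>P. \<Sum>m'\<in>P. al \<omega> n m n' m' * (u n m * cnj (u n' m')))) =
      (\<Sum>n\<in>P. integral\<^sup>L steinhaus (\<lambda>\<omega>. \<Sum>m\<in>P. \<Sum>n'\<in>P. \<Sum>m'\<in>P. al \<omega> n m n' m' * (u n m * cnj (u n' m'))))"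
      by (rule Bochner_Integration.integral_sum) (auto intro!: Bochner_Integration.integrable_sum int)
    also have "\<dots> = (\<Sum>n\<in>P. \<Sum>m\<in>P. integral\<^sup>L steinhaus (\<lambda>\<omega>. \<Sum>n'\<in>P. \<Sum>m'\<in>P. al \<omega> n m n' m' * (u n m * cnj (u n' m'))))"
      by (intro sum.cong refl Bochner_Integration.integral_sum) (auto intro!: Bochner_Integration.integrable_sum int)
    also have "\<dots> = (\<Sum>n\<in>P. \<Sum>m\<in>P. \<Sum>n'\<in>P. integral\<^sup>L steinhaus (\<lambda>\<omega>. \<Sum>m'\<in>P. al \<omega> n m n' m' * (u n m * cnj (u n' m'))))"
      by (intro sum.cong refl Bochner_Integration.integral_sum) (auto intro!: Bochner_Integration.integrable_sum int)
    also have "\<dots> = (\<Sum>n\<in>P. \<Sum>m\<in>P. \<Sum>n'\<in>P. \<Sum>m'\<in>P. integral\<^sup>L steinhaus (\<lambda>\<omega>. al \<omega> n m n' m' * (u n m * cnj (u n' m'))))"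
      by (intro sum.cong refl Bochner_Integration.integral_sum) (auto intro!: int)
    finally show ?thesis .
  qed
  also have "\<dots> = (\<Sum>n\<in>P. \<Sum>m\<in>P. \<Sum>n'\<in>P. \<Sum>m'\<in>P. u n m * cnj (u n' m') * (if n * m' = m * n' then 1 else 0))"
  proof (intro sum.cong refl)
    fix n m n' m' assume "n \<in> P" "m \<in> P" "n' \<in> P" "m' \<in> P"
    then have pos: "n > 0" "m > 0" "n' > 0" "m' > 0" unfolding P_def by auto
    show "integral\<^sup>L steinhaus (\<lambda>\<omega>. al \<omega> n m n' m' * (u n m * cnj (u n' m'))) = u n m * cnj (u n' m') * (if n * m' = m * n' then 1 else 0)"
      unfolding al_def integral_mult_left_zero alpha_moment(2)[OF pos] by (simp add: mult.commute)
  qed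
  finally show ?thesis unfolding F_def .
qed



definition key :: "nat \<times> nat \<Rightarrow> nat \<times> nat" where
  "key q = (fst q div gcd (fst q) (snd q), snd q div gcd (fst q) (snd q))"

lemma key_eq_iff:
  fixes n m n' m' :: nat
  assumes pos: "n > 0" "m > 0" "n' > 0" "m' > 0"
  shows "n * m' = m * n' \<longleftrightarrow> key (n, m) = key (n', m')"
proof -
  define g where "g = gcd n m"
  define g' where "g' = gcd n' m'"
  define a where "a = n div g"
  define b where "b = m div g"
  define a' where "a' = n' div g'"
  define b' where "b' = m' div g'"
  have gp: "g > 0" "g' > 0" using pos unfolding g_def g'_def by auto
  have n: "n = a * g" and m: "m = b * g" and n': "n' = a' * g'" and m': "m' = b' * g'"
    unfolding a_def b_def a'_def b'_def g_def g'_def by simp_all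
  have cop: "coprime a b" "coprime a' b'"
    unfolding a_def b_def a'_def b'_def g_def g'_def using pos by (auto intro: div_gcd_coprime)
  have k: "key (n, m) = (a, b)" "key (n', m') = (a', b')"
    unfolding key_def a_def b_def a'_def b'_def g_def g'_def by simp_all
  have "n * m' = m * n' \<longleftrightarrow> a * b' * (g * g') = b * a' * (g * g')"
    unfolding n m n' m' by (simp add: mult_ac)
  also have "\<dots> \<longleftrightarrow> a * b' = b * a'" using gp by simp
  also have "\<dots> \<longleftrightarrow> a = a' \<and> b = b'"
  proof
    assume E: "a * b' = b * a'"
    have "a dvd b * a'" using E by (metis dvd_triv_left)
    then have "a dvd a'" using cop(1) by (simp add: coprime_dvd_mult_right_iff)
    moreover have "a' dvd a * b'" using E by (metis dvd_triv_right)
    then have "a' dvd a" using cop(2) by (simp add: coprime_dvd_mult_left_iff)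
    ultimately have "a = a'" by (rule dvd_antisym)
    moreover have "a > 0" using pos(1) n by (metis mult_is_0 neq0_conv)
    ultimately show "a = a' \<and> b = b'" using E by auto
  qed auto
  finally show ?thesis using k by simp
qed


lemma key_in_T:
  fixes x :: real
  assumes x: "1 \<le> x" and q: "q \<in> {1..nat \<lfloor>x\<rfloor>} \<times> {1..nat \<lfloor>x\<rfloor>}"
  shows "key q \<in> {(n1, n2). 1 \<le> n1 \<and> real n1 \<le> x \<and> 1 \<le> n2 \<and> real n2 \<le> x \<and> coprime n1 n2}"
proof -
  obtain n m where q': "q = (n, m)" by (cases q)
  have pos: "n > 0" "m > 0" and le: "n \<le> nat \<lfloor>x\<rfloor>" "m \<le> nat \<lfloor>x\<rfloor>" using q q' by auto
  have le': "real n \<le> x" "real m \<le> x" using le x by (simp_all add: le_floor_nat_iff)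
  define g where "g = gcd n m"
  have gp: "g > 0" "g dvd n" "g dvd m" using pos unfolding g_def by auto
  have a1: "n div g \<ge> 1" using gp pos by (metis One_nat_def Suc_leI div_greater_zero_iff dvd_imp_le)
  have b1: "m div g \<ge> 1" using gp pos by (metis One_nat_def Suc_leI div_greater_zero_iff dvd_imp_le)
  have a2: "n div g \<le> n" "m div g \<le> m" by simp_all
  have "coprime (n div g) (m div g)" unfolding g_def using pos by (intro div_gcd_coprime) auto
  moreover have "key q = (n div g, m div g)" unfolding q' key_def g_def by simp
  moreover have "real (n div g) \<le> x" "real (m div g) \<le> x"
    using a2 le' by (meson of_nat_le_iff order_trans)+
  ultimately show ?thesis using a1 b1 by simp
qed

lemma group4:
  fixes u :: "nat \<Rightarrow> nat \<Rightarrow> complex" and x :: real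
  assumes x: "1 \<le> x"
  defines "P \<equiv> {1..nat \<lfloor>x\<rfloor>}"
  defines "T \<equiv> {(n1, n2). 1 \<le> n1 \<and> real n1 \<le> x \<and> 1 \<le> n2 \<and> real n2 \<le> x \<and> coprime n1 n2}"
  defines "c \<equiv> (\<lambda>k. \<Sum>q\<in>{q. q \<in> P \<times> P \<and> key q = k}. u (fst q) (snd q))"
  shows "(\<Sum>n\<in>P. \<Sum>m\<in>P. \<Sum>n'\<in>P. \<Sum>m'\<in>P. u n m * cnj (u n' m') * (if n * m' = m * n' then 1 else 0))
     = (\<Sum>k\<in>T. c k * cnj (c k))"
proof -
  define S where "S = P \<times> P"
  define C where "C k = (\<Sum>q\<in>{q. q \<in> S \<and> key q = k}. cnj (u (fst q) (snd q)))" for k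
  have fS: "finite S" unfolding S_def P_def by simp
  have TS: "T \<subseteq> S" unfolding T_def S_def P_def using x
    by (auto simp: le_floor_nat_iff)
  have fT: "finite T" using finite_subset[OF TS fS] .
  have kT: "key ` S \<subseteq> T"
  proof
    fix k assume "k \<in> key ` S"
    then obtain q where q: "q \<in> S" "k = key q" by blast
    show "k \<in> T" using key_in_T[OF x q(1)[unfolded S_def P_def]] unfolding q(2) T_def .
  qed
  have inner: "(\<Sum>n'\<in>P. \<Sum>m'\<in>P. cnj (u n' m') * (if key (n, m) = key (n', m') then 1 else 0)) = C (key (n, m))" for n m
  proof -
    have "(\<Sum>n'\<in>P. \<Sum>m'\<in>P. cnj (u n' m') * (if key (n, m) = key (n', m') then 1 else 0)) =
       (\<Sum>q\<in>S. if key q = key (n, m) then cnj (u (fst q) (snd q)) else 0)"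
      unfolding S_def sum.cartesian_product by (intro sum.cong refl) auto
    also have "\<dots> = C (key (n, m))"
      unfolding C_def by (rule sum.inter_filter[OF fS, symmetric])
    finally show ?thesis .
  qed
  have "(\<Sum>n\<in>P. \<Sum>m\<in>P. \<Sum>n'\<in>P. \<Sum>m'\<in>P. u n m * cnj (u n' m') * (if n * m' = m * n' then 1 else 0))
     = (\<Sum>n\<in>P. \<Sum>m\<in>P. u n m * (\<Sum>n'\<in>P. \<Sum>m'\<in>P. cnj (u n' m') * (if key (n, m) = key (n', m') then 1 else 0)))"
  proof (intro sum.cong refl)
    fix n m assume nm: "n \<in> P" "m \<in> P"
    have "(\<Sum>n'\<in>P. \<Sum>m'\<in>P. u n m * cnj (u n' m') * (if n * m' = m * n' then 1 else 0)) =
        (\<Sum>n'\<in>P. \<Sum>m'\<in>P. u n m * (cnj (u n' m') * (if key (n, m) = key (n', m') then 1 else 0)))"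
    proof (intro sum.cong refl)
      fix n' m' assume "n' \<in> P" "m' \<in> P"
      then have "n * m' = m * n' \<longleftrightarrow> key (n, m) = key (n', m')"
        using nm unfolding P_def by (intro key_eq_iff) auto
      then show "u n m * cnj (u n' m') * (if n * m' = m * n' then 1 else 0) =
          u n m * (cnj (u n' m') * (if key (n, m) = key (n', m') then 1 else 0))" by simp
    qed
    then show "(\<Sum>n'\<in>P. \<Sum>m'\<in>P. u n m * cnj (u n' m') * (if n * m' = m * n' then 1 else 0)) =
        u n m * (\<Sum>n'\<in>P. \<Sum>m'\<in>P. cnj (u n' m') * (if key (n, m) = key (n', m') then 1 else 0))"
      by (simp only: sum_distrib_left)
  qed
  also have "\<dots> = (\<Sum>n\<in>P. \<Sum>m\<in>P. u n m * C (key (n, m)))"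
    by (simp only: inner)
  also have "\<dots> = (\<Sum>q\<in>S. u (fst q) (snd q) * C (key q))"
    unfolding S_def sum.cartesian_product by (simp add: case_prod_beta)
  also have "\<dots> = (\<Sum>k\<in>T. \<Sum>q\<in>{q. q \<in> S \<and> key q = k}. u (fst q) (snd q) * C (key q))"
    by (rule sum.group[OF fS fT kT, symmetric])
  also have "\<dots> = (\<Sum>k\<in>T. c k * cnj (c k))"
  proof (intro sum.cong refl)
    fix k
    have "(\<Sum>q\<in>{q. q \<in> S \<and> key q = k}. u (fst q) (snd q) * C (key q)) =
        (\<Sum>q\<in>{q. q \<in> S \<and> key q = k}. u (fst q) (snd q) * C k)"
      by (intro sum.cong refl) auto
    also have "\<dots> = c k * C k" unfolding c_def S_def by (simp only: sum_distrib_right)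
    also have "C k = cnj (c k)" unfolding C_def c_def S_def by simp
    finally show "(\<Sum>q\<in>{q. q \<in> S \<and> key q = k}. u (fst q) (snd q) * C (key q)) = c k * cnj (c k)" .
  qed
  finally show ?thesis .
qed



lemma coprime_by_primes:
  fixes a b :: nat
  assumes "\<And>p. prime p \<Longrightarrow> p dvd a \<Longrightarrow> p dvd b \<Longrightarrow> False"
  shows "coprime a b"
proof (rule ccontr)
  assume "\<not> coprime a b"
  then have "gcd a b \<noteq> 1" by (simp add: coprime_iff_gcd_eq_1)
  then obtain p where "prime p" "p dvd gcd a b" using prime_factor_nat by blast
  then show False using assms by auto
qed

definition PD :: "nat \<Rightarrow> nat \<Rightarrow> bool" where
  "PD u A \<longleftrightarrow> (\<forall>p. prime p \<longrightarrow> p dvd u \<longrightarrow> p dvd A)"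

lemma PD_mult: "PD u A \<Longrightarrow> PD v A \<Longrightarrow> PD (u * v) A"
  unfolding PD_def by (auto simp: prime_dvd_mult_iff)

lemma PD_self: "PD A A" unfolding PD_def by auto

lemma PD_prime: "prime p \<Longrightarrow> p dvd A \<Longrightarrow> PD p A"
  unfolding PD_def using primes_dvd_imp_eq by blast

lemma dpi_PD: "divides_pow_inf g A \<longleftrightarrow> g > 0 \<and> PD g A"
  unfolding divides_pow_inf_def PD_def by auto

lemma PD_coprime:
  assumes "PD u A" "\<And>p. prime p \<Longrightarrow> p dvd A \<Longrightarrow> \<not> p dvd v"
  shows "coprime u v"
  using assms unfolding PD_def by (intro coprime_by_primes) blast

lemma coprime_prime_not:
  fixes h A :: nat
  assumes "coprime h A" "prime p" "p dvd A"
  shows "\<not> p dvd h"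
proof
  assume "p dvd h"
  then have "is_unit p" using coprime_common_divisor[OF assms(1) _ assms(3)] by blast
  then show False using assms(2) not_prime_unit by blast
qed

lemma ex_decomp:
  fixes a b d :: nat
  assumes "d > 0"
  shows "\<exists>g1 g2 h. d = g1 * g2 * h \<and> divides_pow_inf g1 a \<and> divides_pow_inf g2 b \<and> h > 0 \<and> coprime h (a * b)"
  using assms
proof (induction d rule: less_induct)
  case (less d)
  show ?case
  proof (cases "d = 1")
    case True
    then show ?thesis by (intro exI[of _ 1]) (auto simp: divides_pow_inf_def)
  next
    case False
    then obtain p where p: "prime p" "p dvd d" using prime_factor_nat by blast
    then obtain d' where d': "d = p * d'" by blast
    have "d' > 0" using less.prems d' by auto
    moreover have "d' < d" using d' p less.prems prime_gt_1_nat by (simp add: d')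
    ultimately obtain g1 g2 h where IH: "d' = g1 * g2 * h" "divides_pow_inf g1 a" "divides_pow_inf g2 b" "h > 0" "coprime h (a * b)"
      using less.IH by blast
    have pp: "p > 0" using p prime_gt_0_nat by blast
    show ?thesis
    proof (cases "p dvd a")
      case True
      have "divides_pow_inf (p * g1) a" using IH(2) pp PD_prime[OF p(1) True]
        by (auto simp: dpi_PD intro: PD_mult)
      then show ?thesis using IH d' by (intro exI[of _ "p * g1"] exI[of _ g2] exI[of _ h]) (auto simp: mult_ac)
    next
      case na: False
      show ?thesis
      proof (cases "p dvd b")
        case True
        have "divides_pow_inf (p * g2) b" using IH(3) pp PD_prime[OF p(1) True]
          by (auto simp: dpi_PD intro: PD_mult)
        then show ?thesis using IH d' by (intro exI[of _ g1] exI[of _ "p * g2"] exI[of _ h]) (auto simp: mult_ac)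
      next
        case nb: False
        have "\<not> p dvd a * b" using na nb p(1) by (simp add: prime_dvd_mult_iff)
        then have "coprime p (a * b)" using prime_imp_coprime[OF p(1)] by blast
        then have "coprime (p * h) (a * b)" using IH(5) by simp
        then show ?thesis using IH d' pp by (intro exI[of _ g1] exI[of _ g2] exI[of _ "p * h"]) (auto simp: mult_ac)
      qed
    qed
  qed
qed

lemma decomp_coprime:
  fixes a b g1 g2 h :: nat
  assumes ab: "coprime a b"
    and g1: "divides_pow_inf g1 a" and g2: "divides_pow_inf g2 b" and h: "coprime h (a * b)"
  shows "coprime g1 (g2 * h)" "coprime g2 (g1 * h)" "coprime (g1 * a) (g2 * h)" "coprime g1 (g2 * b * h)"
proof -
  have nb: "\<not> p dvd b" if "prime p" "p dvd a" for p
    using ab that coprime_prime_not[of a b p] by (metis coprime_commute)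
  have nh: "\<not> p dvd h" if "prime p" "p dvd a * b" for p
    using coprime_prime_not[OF h that] .
  have na: "\<not> p dvd a" if "prime p" "p dvd b" for p
    using ab that coprime_prime_not[of b a p] by (metis coprime_commute)
  have PDg1: "PD g1 a" and PDg2: "PD g2 b" using g1 g2 by (simp_all add: dpi_PD)
  show "coprime g1 (g2 * h)"
  proof (rule PD_coprime[OF PDg1])
    fix p :: nat assume p: "prime p" "p dvd a"
    show "\<not> p dvd g2 * h"
      using p nb[OF p] nh[OF p(1)] PDg2 by (auto simp: prime_dvd_mult_iff PD_def)
  qed
  show "coprime g2 (g1 * h)"
  proof (rule PD_coprime[OF PDg2])
    fix p :: nat assume p: "prime p" "p dvd b"
    show "\<not> p dvd g1 * h"
      using p na[OF p] nh[OF p(1)] PDg1 by (auto simp: prime_dvd_mult_iff PD_def)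
  qed
  show "coprime (g1 * a) (g2 * h)"
  proof (rule PD_coprime[OF PD_mult[OF PDg1 PD_self]])
    fix p :: nat assume p: "prime p" "p dvd a"
    show "\<not> p dvd g2 * h"
      using p nb[OF p] nh[OF p(1)] PDg2 by (auto simp: prime_dvd_mult_iff PD_def)
  qed
  show "coprime g1 (g2 * b * h)"
  proof (rule PD_coprime[OF PDg1])
    fix p :: nat assume p: "prime p" "p dvd a"
    show "\<not> p dvd g2 * b * h"
      using p nb[OF p] nh[OF p(1)] PDg2 by (auto simp: prime_dvd_mult_iff PD_def)
  qed
qed

lemma decomp_unique:
  fixes a b :: nat
  assumes ab: "coprime a b"
    and 1: "divides_pow_inf g1 a" "divides_pow_inf g2 b" "h > 0" "coprime h (a * b)"
    and 2: "divides_pow_inf g1' a" "divides_pow_inf g2' b" "h' > 0" "coprime h' (a * b)"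
    and eq: "g1 * g2 * h = g1' * g2' * h'"
  shows "g1 = g1' \<and> g2 = g2' \<and> h = h'"
proof -
  have c1: "coprime g1 (g2' * h')" using decomp_coprime[OF ab 1(1) 2(2) 2(4)] by blast
  have c1': "coprime g1' (g2 * h)" using decomp_coprime[OF ab 2(1) 1(2) 1(4)] by blast
  have c2: "coprime g2 (g1' * h')" using decomp_coprime[OF ab 2(1) 1(2) 2(4)] by blast
  have c2': "coprime g2' (g1 * h)" using decomp_coprime[OF ab 1(1) 2(2) 1(4)] by blast
  have "g1 dvd g1' * (g2' * h')" using eq by (metis dvd_triv_left mult.assoc)
  then have d1: "g1 dvd g1'" using c1 coprime_dvd_mult_left_iff by blast
  have "g1' dvd g1 * (g2 * h)" using eq by (metis dvd_triv_left mult.assoc)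
  then have "g1' dvd g1" using c1' coprime_dvd_mult_left_iff by blast
  with d1 have e1: "g1 = g1'" by (rule dvd_antisym)
  have "g2 dvd g2' * (g1' * h')" using eq by (metis dvd_triv_left mult.assoc mult.commute)
  then have d2: "g2 dvd g2'" using c2 coprime_dvd_mult_left_iff by blast
  have "g2' dvd g2 * (g1 * h)" using eq by (metis dvd_triv_left mult.assoc mult.commute)
  then have "g2' dvd g2" using c2' coprime_dvd_mult_left_iff by blast
  with d2 have e2: "g2 = g2'" by (rule dvd_antisym)
  have "g1 > 0" "g2 > 0" using 1 by (auto simp: divides_pow_inf_def)
  then have "h = h'" using eq e1 e2 by simp
  with e1 e2 show ?thesis by simp
qed



lemma fiber_sum:
  fixes u :: "nat \<Rightarrow> nat \<Rightarrow> complex" and x :: real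
  assumes x: "1 \<le> x" and ab: "a \<ge> 1" "b \<ge> 1" "coprime a b"
  defines "P \<equiv> {1..nat \<lfloor>x\<rfloor>}"
  shows "(\<Sum>q\<in>{q. q \<in> P \<times> P \<and> key q = (a, b)}. u (fst q) (snd q)) =
     (\<Sum>d\<in>{d. 1 \<le> d \<and> real (d * max a b) \<le> x}. u (d * a) (d * b))"
proof -
  define D where "D = {d. 1 \<le> d \<and> real (d * max a b) \<le> x}"
  define \<phi> where "\<phi> d = (d * a, d * b)" for d
  have inj: "inj_on \<phi> D" unfolding \<phi>_def inj_on_def using ab by auto
  have img: "{q. q \<in> P \<times> P \<and> key q = (a, b)} = \<phi> ` D"
  proof (intro equalityI subsetI)
    fix q assume "q \<in> {q. q \<in> P \<times> P \<and> key q = (a, b)}"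
    then obtain n m where q: "q = (n, m)" "n \<in> P" "m \<in> P" "key (n, m) = (a, b)" by auto
    define g where "g = gcd n m"
    have pos: "n > 0" "m > 0" using q unfolding P_def by auto
    have "n div g = a" "m div g = b" using q(4) unfolding key_def g_def by auto
    then have nm: "n = g * a" "m = g * b" unfolding g_def by (metis dvd_div_mult_self gcd_dvd1 gcd_dvd2 mult.commute)+
    have gp: "g \<ge> 1" using pos unfolding g_def by (simp add: Suc_le_eq)
    have "max n m \<le> nat \<lfloor>x\<rfloor>" using q unfolding P_def by auto
    then have "real (max n m) \<le> x" using x by (simp add: le_floor_nat_iff of_nat_max)
    moreover have "max n m = g * max a b" unfolding nm by (simp add: nat_mult_max_right)
    ultimately have "g \<in> D" using gp unfolding D_def by simp
    then show "q \<in> \<phi> ` D" unfolding q(1) nm \<phi>_def by auto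
  next
    fix q assume "q \<in> \<phi> ` D"
    then obtain d where d: "d \<in> D" "q = (d * a, d * b)" unfolding \<phi>_def by auto
    have d1: "d \<ge> 1" and dx: "real (d * max a b) \<le> x" using d unfolding D_def by auto
    have "d * a \<le> d * max a b" "d * b \<le> d * max a b" by simp_all
    then have "real (d * a) \<le> x" "real (d * b) \<le> x" using dx by (meson of_nat_le_iff order_trans)+
    then have inP: "d * a \<in> P" "d * b \<in> P" unfolding P_def using x d1 ab by (auto simp: le_floor_nat_iff)
    have "gcd (d * a) (d * b) = d" using ab(3) by (simp add: gcd_mult_left)
    then have "key (d * a, d * b) = (a, b)" unfolding key_def using d1 by simp
    then show "q \<in> {q. q \<in> P \<times> P \<and> key q = (a, b)}" using inP d(2) by simp
  qed
  show ?thesis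
    unfolding img D_def[symmetric] by (subst sum.reindex[OF inj]) (simp add: \<phi>_def)
qed



lemma multD: "multiplicative f \<Longrightarrow> coprime n m \<Longrightarrow> f (n * m) = f n * f m"
  unfolding multiplicative_def by blast

lemma Fm_small: "y < 1 \<Longrightarrow> Fm f m y = 0"
proof -
  assume "y < 1"
  then have "{h::nat. 1 \<le> h \<and> real h \<le> y \<and> coprime h m} = {}" by auto
  then show ?thesis unfolding Fm_def by (simp only: sum.empty)
qed

lemma pointwise_t:
  fixes f :: "nat \<Rightarrow> complex" and x :: real
  assumes mult: "multiplicative f" and ab: "coprime a b" "a \<ge> 1" "b \<ge> 1"
    and g: "divides_pow_inf g1 a" "divides_pow_inf g2 b" "h \<ge> 1" "coprime h (a * b)"
  defines "K \<equiv> real (max a b * g1 * g2)"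
  shows "f (g1 * g2 * h * a) * cnj (f (g1 * g2 * h * b)) *
      of_real (1 / real (max (g1 * g2 * h * a) (g1 * g2 * h * b)) - 1 / x) =
    cnj (f g1) * f (g1 * a) * f g2 * cnj (f (g2 * b)) *
      of_real ((cmod (f h))^2 * (1 / real h - 1 / (x / K)) / K)"
proof -
  note dc = decomp_coprime[OF ab(1) g(1,2,4)]
  have cg2h: "coprime g2 h" using dc(2) by simp
  have chb: "coprime h b" using g(4) by simp
  have c2: "coprime (g2 * b) h" using cg2h chb by (simp add: coprime_commute)
  have fa: "f (g1 * g2 * h * a) = f (g1 * a) * f g2 * f h"
  proof -
    have "f (g1 * g2 * h * a) = f ((g1 * a) * (g2 * h))" by (simp add: mult_ac)
    also have "\<dots> = f (g1 * a) * f (g2 * h)" using multD[OF mult dc(3)] .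
    also have "f (g2 * h) = f g2 * f h" using multD[OF mult cg2h] .
    finally show ?thesis by (simp add: mult_ac)
  qed
  have fb: "f (g1 * g2 * h * b) = f g1 * f (g2 * b) * f h"
  proof -
    have "f (g1 * g2 * h * b) = f (g1 * (g2 * b * h))" by (simp add: mult_ac)
    also have "\<dots> = f g1 * f (g2 * b * h)" using multD[OF mult dc(4)] .
    also have "f (g2 * b * h) = f (g2 * b) * f h" using multD[OF mult c2] .
    finally show ?thesis by (simp add: mult_ac)
  qed
  have g1p: "g1 > 0" "g2 > 0" using g(1,2) by (auto simp: divides_pow_inf_def)
  have Kp: "K > 0" unfolding K_def using g1p ab by simp
  have mx: "real (max (g1 * g2 * h * a) (g1 * g2 * h * b)) = K * real h"
  proof -
    have "max (g1 * g2 * h * a) (g1 * g2 * h * b) = (g1 * g2 * h) * max a b"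
      by (simp only: nat_mult_max_right[symmetric] mult.assoc)
    then show ?thesis unfolding K_def by (simp only: of_nat_mult mult_ac)
  qed
  have w: "1 / real (max (g1 * g2 * h * a) (g1 * g2 * h * b)) - 1 / x = (1 / real h - 1 / (x / K)) / K"
    unfolding mx using Kp g(3) by (simp add: field_simps)
  have fh: "f h * cnj (f h) = of_real ((cmod (f h))^2)" by (rule complex_norm_square[symmetric])
  have e: "(of_real ((cmod (f h))^2 * (1 / real h - 1 / (x / K)) / K) :: complex) =
      f h * cnj (f h) * of_real ((1 / real h - 1 / (x / K)) / K)"
  proof -
    have "(cmod (f h))^2 * (1 / real h - 1 / (x / K)) / K = (cmod (f h))^2 * ((1 / real h - 1 / (x / K)) / K)"
      by (rule times_divide_eq_right[symmetric])
    then show ?thesis by (simp only: of_real_mult fh)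
  qed
  show ?thesis unfolding fa fb w e
    by (simp only: complex_cnj_mult mult_ac)
qed


lemma c_formula:
  fixes f :: "nat \<Rightarrow> complex" and x :: real
  assumes mult: "multiplicative f" and x: "1 \<le> x" and F: "Fm f 1 x > 0"
    and ab: "coprime a b" "a \<ge> 1" "b \<ge> 1"
  shows "(\<Sum>d\<in>{d. 1 \<le> d \<and> real (d * max a b) \<le> x}.
           f (d * a) * cnj (f (d * b)) * of_real (1 / real (max (d * a) (d * b)) - 1 / x)) =
    of_real (Fm f 1 x / real (max a b)) *
    (\<Sum>\<^sub>\<infinity>(g1, g2)\<in>{(g1, g2). divides_pow_inf g1 a \<and> divides_pow_inf g2 b}.
          cnj (f g1) * f (g1 * a) * f g2 * cnj (f (g2 * b)) / of_nat (g1 * g2)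
          * of_real (S1 f x (a * b) (max a b * g1 * g2)))"
proof -
  define M where "M = max a b"
  define D where "D = {d. 1 \<le> d \<and> real (d * M) \<le> x}"
  define E where "E = {(g1, g2). divides_pow_inf g1 a \<and> divides_pow_inf g2 b}"
  define E' where "E' = {q. q \<in> E \<and> real (M * fst q * snd q) \<le> x}"
  define K where "K g1 g2 = real (M * g1 * g2)" for g1 g2
  define H where "H q = {h::nat. 1 \<le> h \<and> real h \<le> x / K (fst q) (snd q) \<and> coprime h (a * b)}" for q
  define coef where "coef g1 g2 = cnj (f g1) * f (g1 * a) * f g2 * cnj (f (g2 * b))" for g1 g2
  define trm where "trm g1 g2 = coef g1 g2 / of_nat (g1 * g2) * of_real (S1 f x (a * b) (M * g1 * g2))" for g1 g2
  define t where "t d = f (d * a) * cnj (f (d * b)) * of_real (1 / real (max (d * a) (d * b)) - 1 / x)" for d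
  define FF where "FF = Fm f 1 x"
  have FF: "FF \<noteq> 0" using F unfolding FF_def by simp
  have Mp: "M \<ge> 1" unfolding M_def using ab by simp
  have Epos: "fst q \<ge> 1" "snd q \<ge> 1" if "q \<in> E" for q
    using that unfolding E_def divides_pow_inf_def by (auto simp: Suc_le_eq)
  have Kp: "K (fst q) (snd q) > 0" if "q \<in> E" for q
    using Epos[OF that] Mp unfolding K_def by simp
  have fE': "finite E'"
  proof (rule finite_subset[of _ "{..nat \<lfloor>x\<rfloor>} \<times> {..nat \<lfloor>x\<rfloor>}"])
    show "E' \<subseteq> {..nat \<lfloor>x\<rfloor>} \<times> {..nat \<lfloor>x\<rfloor>}"
    proof
      fix q assume q: "q \<in> E'"
      then have qE: "q \<in> E" and qx: "real (M * fst q * snd q) \<le> x" unfolding E'_def by auto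
      have "fst q \<le> M * fst q * snd q" "snd q \<le> M * fst q * snd q"
        using Epos[OF qE] Mp by simp_all
      then have "real (fst q) \<le> x" "real (snd q) \<le> x" using qx by (meson of_nat_le_iff order_trans)+
      then show "q \<in> {..nat \<lfloor>x\<rfloor>} \<times> {..nat \<lfloor>x\<rfloor>}" using x
        by (cases q) (auto simp: le_floor_nat_iff)
    qed
  qed simp
  have fH: "finite (H q)" for q
    unfolding H_def by (rule finite_subset[of _ "{..nat \<lfloor>x / K (fst q) (snd q)\<rfloor>}"]) (auto simp: le_nat_iff le_floor_iff)
  have inf: "(\<Sum>\<^sub>\<infinity>(g1, g2)\<in>E. trm g1 g2) = (\<Sum>q\<in>E'. trm (fst q) (snd q))"
  proof -
    have "(\<Sum>\<^sub>\<infinity>(g1, g2)\<in>E. trm g1 g2) = (\<Sum>\<^sub>\<infinity>q\<in>E'. trm (fst q) (snd q))"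
    proof (rule infsum_cong_neutral)
      fix q assume "q \<in> E - E'"
      then have qE: "q \<in> E" and qx: "\<not> real (M * fst q * snd q) \<le> x" unfolding E'_def by auto
      have "x / K (fst q) (snd q) < 1" using qx Kp[OF qE] unfolding K_def by (simp add: divide_less_eq)
      then have "S1 f x (a * b) (M * fst q * snd q) = 0"
        unfolding S1_def K_def by (simp add: Fm_small)
      then show "(case q of (g1, g2) \<Rightarrow> trm g1 g2) = 0" unfolding trm_def by (cases q) simp
    qed (auto simp: E'_def split: prod.splits)
    also have "\<dots> = (\<Sum>q\<in>E'. trm (fst q) (snd q))" using fE' by simp
    finally show ?thesis .
  qed
  have rhs: "of_real (FF / real M) * (\<Sum>q\<in>E'. trm (fst q) (snd q)) =
      (\<Sum>q\<in>E'. coef (fst q) (snd q) * of_real (Fm f (a * b) (x / K (fst q) (snd q)) / K (fst q) (snd q)))"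
  proof -
    have "of_real (FF / real M) * (\<Sum>q\<in>E'. trm (fst q) (snd q)) = (\<Sum>q\<in>E'. of_real (FF / real M) * trm (fst q) (snd q))"
      by (rule sum_distrib_left)
    also have "\<dots> = (\<Sum>q\<in>E'. coef (fst q) (snd q) * of_real (Fm f (a * b) (x / K (fst q) (snd q)) / K (fst q) (snd q)))"
    proof (rule sum.cong[OF refl])
      fix q assume "q \<in> E'"
      then have qE: "q \<in> E" unfolding E'_def by auto
      define g1 where "g1 = fst q"
      define g2 where "g2 = snd q"
      define Fv where "Fv = Fm f (a * b) (x / K g1 g2)"
      have pos: "real g1 > 0" "real g2 > 0" "real M > 0" using Epos[OF qE] Mp unfolding g1_def g2_def by auto
      have "of_real (FF / real M) * trm g1 g2 =
          coef g1 g2 * of_real (FF / real M * (1 / (real g1 * real g2)) * (Fv / FF))"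
        unfolding trm_def S1_def Fv_def K_def FF_def
        by (simp add: of_real_mult divide_complex_def mult_ac)
      also have "FF / real M * (1 / (real g1 * real g2)) * (Fv / FF) = Fv / K g1 g2"
        unfolding K_def using FF pos by (simp add: field_simps)
      finally show "of_real (FF / real M) * trm (fst q) (snd q) =
          coef (fst q) (snd q) * of_real (Fm f (a * b) (x / K (fst q) (snd q)) / K (fst q) (snd q))"
        unfolding g1_def g2_def Fv_def .
    qed
    finally show ?thesis .
  qed
  define \<phi> where "\<phi> z = fst (fst z) * snd (fst z) * snd z" for z :: "(nat \<times> nat) \<times> nat"
  have inj: "inj_on \<phi> (Sigma E' H)"
  proof (rule inj_onI)
    fix z z' assume z: "z \<in> Sigma E' H" and z': "z' \<in> Sigma E' H" and eq: "\<phi> z = \<phi> z'"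
    obtain g1 g2 h where zz: "z = ((g1, g2), h)" by (metis prod.collapse)
    obtain g1' g2' h' where zz': "z' = ((g1', g2'), h')" by (metis prod.collapse)
    have "g1 = g1' \<and> g2 = g2' \<and> h = h'"
      using z z' eq unfolding zz zz' \<phi>_def E'_def E_def H_def
      by (intro decomp_unique[OF ab(1)]) auto
    then show "z = z'" unfolding zz zz' by simp
  qed
  have img: "\<phi> ` (Sigma E' H) = D"
  proof (intro equalityI subsetI)
    fix d assume "d \<in> \<phi> ` (Sigma E' H)"
    then obtain g1 g2 h where z: "(g1, g2) \<in> E'" "h \<in> H (g1, g2)" and d: "d = g1 * g2 * h"
      unfolding \<phi>_def by auto
    have qE: "(g1, g2) \<in> E" using z unfolding E'_def by auto
    have h1: "h \<ge> 1" and hx: "real h \<le> x / K g1 g2" using z unfolding H_def by auto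
    have Kp': "K g1 g2 > 0" using Kp[OF qE] by simp
    have "real (d * M) = K g1 g2 * real h" unfolding d K_def by (simp add: mult_ac)
    also have "\<dots> \<le> x" using hx Kp' by (simp add: le_divide_eq mult.commute)
    finally have "real (d * M) \<le> x" .
    moreover have "d \<ge> 1" unfolding d using Epos[OF qE] h1 by simp
    ultimately show "d \<in> D" unfolding D_def by simp
  next
    fix d assume "d \<in> D"
    then have d1: "d \<ge> 1" and dx: "real (d * M) \<le> x" unfolding D_def by auto
    obtain g1 g2 h where dec: "d = g1 * g2 * h" "divides_pow_inf g1 a" "divides_pow_inf g2 b" "h > 0" "coprime h (a * b)"
      using ex_decomp[of d a b] d1 by auto
    have qE: "(g1, g2) \<in> E" using dec unfolding E_def by simp
    have Kp': "K g1 g2 > 0" using Kp[OF qE] by simp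
    have eqK: "real (d * M) = K g1 g2 * real h" unfolding dec(1) K_def by (simp add: mult_ac)
    have "K g1 g2 \<le> K g1 g2 * real h" using Kp' dec(4) by simp
    then have "real (M * g1 * g2) \<le> x" using dx eqK unfolding K_def by linarith
    then have inE': "(g1, g2) \<in> E'" using qE unfolding E'_def by simp
    have "real h \<le> x / K g1 g2" using dx eqK Kp' by (simp add: le_divide_eq mult.commute)
    then have "h \<in> H (g1, g2)" using dec unfolding H_def by (simp add: Suc_le_eq)
    with inE' have "((g1, g2), h) \<in> Sigma E' H" by simp
    moreover have "\<phi> ((g1, g2), h) = d" unfolding \<phi>_def dec(1) by simp
    ultimately show "d \<in> \<phi> ` (Sigma E' H)" by (metis image_eqI)
  qed
  have lhs: "(\<Sum>d\<in>D. t d) = (\<Sum>q\<in>E'. coef (fst q) (snd q) * of_real (Fm f (a * b) (x / K (fst q) (snd q)) / K (fst q) (snd q)))"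
  proof -
    have "(\<Sum>d\<in>D. t d) = (\<Sum>z\<in>Sigma E' H. t (\<phi> z))"
      unfolding img[symmetric] by (rule sum.reindex[OF inj, unfolded comp_def])
    also have "\<dots> = (\<Sum>q\<in>E'. \<Sum>h\<in>H q. t (\<phi> (q, h)))"
    proof -
      have "(\<Sum>q\<in>E'. \<Sum>h\<in>H q. t (\<phi> (q, h))) = (\<Sum>(q, h)\<in>Sigma E' H. t (\<phi> (q, h)))"
        by (rule sum.Sigma) (use fE' fH in auto)
      also have "(\<lambda>(q, h). t (\<phi> (q, h))) = (\<lambda>z. t (\<phi> z))" by auto
      finally show ?thesis by simp
    qed
    also have "\<dots> = (\<Sum>q\<in>E'. \<Sum>h\<in>H q. coef (fst q) (snd q) *
        of_real ((cmod (f h))^2 * (1 / real h - 1 / (x / K (fst q) (snd q))) / K (fst q) (snd q)))"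
    proof (intro sum.cong refl)
      fix q h assume q: "q \<in> E'" and h: "h \<in> H q"
      obtain g1 g2 where qq: "q = (g1, g2)" by (cases q)
      have g: "divides_pow_inf g1 a" "divides_pow_inf g2 b" using q unfolding qq E'_def E_def by auto
      have hh: "h \<ge> 1" "coprime h (a * b)" using h unfolding H_def by auto
      show "t (\<phi> (q, h)) = coef (fst q) (snd q) *
          of_real ((cmod (f h))^2 * (1 / real h - 1 / (x / K (fst q) (snd q))) / K (fst q) (snd q))"
        unfolding qq t_def \<phi>_def coef_def K_def M_def fst_conv snd_conv
        by (rule pointwise_t[OF mult ab g hh])
    qed
    also have "\<dots> = (\<Sum>q\<in>E'. coef (fst q) (snd q) * of_real (Fm f (a * b) (x / K (fst q) (snd q)) / K (fst q) (snd q)))"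
    proof (intro sum.cong refl)
      fix q
      have "(\<Sum>h\<in>H q. coef (fst q) (snd q) *
          of_real ((cmod (f h))^2 * (1 / real h - 1 / (x / K (fst q) (snd q))) / K (fst q) (snd q))) =
          coef (fst q) (snd q) * of_real ((\<Sum>h\<in>H q. (cmod (f h))^2 * (1 / real h - 1 / (x / K (fst q) (snd q)))) / K (fst q) (snd q))"
        by (simp only: sum_distrib_left[symmetric] of_real_sum[symmetric] sum_divide_distrib[symmetric])
      also have "(\<Sum>h\<in>H q. (cmod (f h))^2 * (1 / real h - 1 / (x / K (fst q) (snd q)))) = Fm f (a * b) (x / K (fst q) (snd q))"
        unfolding Fm_def H_def ..
      finally show "(\<Sum>h\<in>H q. coef (fst q) (snd q) *
          of_real ((cmod (f h))^2 * (1 / real h - 1 / (x / K (fst q) (snd q))) / K (fst q) (snd q))) =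
          coef (fst q) (snd q) * of_real (Fm f (a * b) (x / K (fst q) (snd q)) / K (fst q) (snd q))" .
    qed
    finally show ?thesis .
  qed
  have "(\<Sum>\<^sub>\<infinity>(g1, g2)\<in>{(g1, g2). divides_pow_inf g1 a \<and> divides_pow_inf g2 b}.
          cnj (f g1) * f (g1 * a) * f g2 * cnj (f (g2 * b)) / of_nat (g1 * g2)
          * of_real (S1 f x (a * b) (max a b * g1 * g2))) = (\<Sum>\<^sub>\<infinity>(g1, g2)\<in>E. trm g1 g2)"
    unfolding E_def trm_def coef_def M_def ..
  then have X: "(\<Sum>\<^sub>\<infinity>(g1, g2)\<in>{(g1, g2). divides_pow_inf g1 a \<and> divides_pow_inf g2 b}.
          cnj (f g1) * f (g1 * a) * f g2 * cnj (f (g2 * b)) / of_nat (g1 * g2)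
          * of_real (S1 f x (a * b) (max a b * g1 * g2))) = (\<Sum>q\<in>E'. trm (fst q) (snd q))"
    using inf by simp
  have L: "(\<Sum>d\<in>{d. 1 \<le> d \<and> real (d * max a b) \<le> x}.
           f (d * a) * cnj (f (d * b)) * of_real (1 / real (max (d * a) (d * b)) - 1 / x)) = (\<Sum>d\<in>D. t d)"
    unfolding D_def t_def M_def ..
  show ?thesis unfolding L lhs rhs[symmetric] X FF_def M_def ..
qed



theorem lemma3p2:
  fixes f :: "nat \<Rightarrow> complex" and x :: real
  assumes "multiplicative f" and "x \<ge> 1" and "Fm f 1 x > 0"
  shows "integral\<^sup>L steinhaus (\<lambda>\<omega>. (U_x f x \<omega>)^2) =
    (\<Sum>(n1, n2)\<in>{(n1, n2). 1 \<le> n1 \<and> real n1 \<le> x \<and> 1 \<le> n2 \<and> real n2 \<le> x \<and> coprime n1 n2}.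
       1 / (real (max n1 n2))^2 *
       (cmod (\<Sum>\<^sub>\<infinity>(g1, g2)\<in>{(g1, g2). divides_pow_inf g1 n1 \<and> divides_pow_inf g2 n2}.
          cnj (f g1) * f (g1 * n1) * f g2 * cnj (f (g2 * n2)) / of_nat (g1 * g2)
          * of_real (S1 f x (n1 * n2) (max n1 n2 * g1 * g2))))^2)"
proof -
  note mult = assms(1) and x = assms(2) and F = assms(3)
  define P where "P = {1..nat \<lfloor>x\<rfloor>}"
  define T where "T = {(n1, n2). 1 \<le> n1 \<and> real n1 \<le> x \<and> 1 \<le> n2 \<and> real n2 \<le> x \<and> coprime n1 n2}"
  define u where "u = (\<lambda>n m. f n * cnj (f m) * of_real (1 / real (max n m) - 1 / x))"
  define c where "c = (\<lambda>k. \<Sum>q\<in>{q. q \<in> P \<times> P \<and> key q = k}. u (fst q) (snd q))"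
  define G where "G = (\<lambda>n1 n2. \<Sum>\<^sub>\<infinity>(g1, g2)\<in>{(g1, g2). divides_pow_inf g1 n1 \<and> divides_pow_inf g2 n2}.
          cnj (f g1) * f (g1 * n1) * f g2 * cnj (f (g2 * n2)) / of_nat (g1 * g2)
          * of_real (S1 f x (n1 * n2) (max n1 n2 * g1 * g2)))"
  define FF where "FF = Fm f 1 x"
  have FF: "FF \<noteq> 0" using F unfolding FF_def by simp
  have "(of_real (integral\<^sup>L steinhaus (\<lambda>\<omega>. (U_x f x \<omega>)^2)) :: complex) =
     (\<Sum>n\<in>P. \<Sum>m\<in>P. \<Sum>n'\<in>P. \<Sum>m'\<in>P. u n m * cnj (u n' m') * (if n * m' = m * n' then 1 else 0))
       / of_real ((Fm f 1 x)^2)"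
    unfolding P_def u_def by (rule EU2[OF x F])
  also have "(\<Sum>n\<in>P. \<Sum>m\<in>P. \<Sum>n'\<in>P. \<Sum>m'\<in>P. u n m * cnj (u n' m') * (if n * m' = m * n' then 1 else 0))
      = (\<Sum>k\<in>T. c k * cnj (c k))"
    unfolding P_def T_def c_def by (rule group4[OF x])
  also have "(\<Sum>k\<in>T. c k * cnj (c k)) / of_real ((Fm f 1 x)^2) =
      (\<Sum>k\<in>T. c k * cnj (c k) / of_real ((Fm f 1 x)^2))"
    by (rule sum_divide_distrib)
  also have "\<dots> = (\<Sum>k\<in>T. of_real (case k of (n1, n2) \<Rightarrow> 1 / (real (max n1 n2))^2 * (cmod (G n1 n2))^2))"
  proof (rule sum.cong[OF refl])
    fix k assume k: "k \<in> T"
    obtain a b where kk: "k = (a, b)" by (cases k)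
    have ab: "coprime a b" "a \<ge> 1" "b \<ge> 1" using k unfolding kk T_def by auto
    have "c k = (\<Sum>d\<in>{d. 1 \<le> d \<and> real (d * max a b) \<le> x}. u (d * a) (d * b))"
      unfolding c_def kk P_def by (rule fiber_sum[OF x ab(2,3,1)])
    also have "\<dots> = of_real (FF / real (max a b)) * G a b"
      unfolding u_def G_def FF_def by (rule c_formula[OF mult x F ab])
    finally have ck: "c k = of_real (FF / real (max a b)) * G a b" .
    have Mp: "real (max a b) > 0" using ab by simp
    have "c k * cnj (c k) = of_real ((FF / real (max a b))^2 * (cmod (G a b))^2)"
    proof -
      have gg: "G a b * cnj (G a b) = of_real ((cmod (G a b))^2)" by (rule complex_norm_square[symmetric])
      have "c k * cnj (c k) = of_real (FF / real (max a b)) * of_real (FF / real (max a b)) * (G a b * cnj (G a b))"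
        unfolding ck complex_cnj_mult complex_cnj_complex_of_real by (simp only: mult_ac)
      also have "\<dots> = of_real ((FF / real (max a b))^2 * (cmod (G a b))^2)"
        unfolding gg by (simp only: of_real_mult power2_eq_square)
      finally show ?thesis .
    qed
    then have "c k * cnj (c k) / of_real ((Fm f 1 x)^2) =
        of_real ((FF / real (max a b))^2 * (cmod (G a b))^2 / FF^2)"
      unfolding FF_def by simp
    also have "(FF / real (max a b))^2 * (cmod (G a b))^2 / FF^2 = 1 / (real (max a b))^2 * (cmod (G a b))^2"
      using FF Mp by (simp add: field_simps)
    finally show "c k * cnj (c k) / of_real ((Fm f 1 x)^2) =
        of_real (case k of (n1, n2) \<Rightarrow> 1 / (real (max n1 n2))^2 * (cmod (G n1 n2))^2)"
      unfolding kk by simp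
  qed
  also have "\<dots> = of_real (\<Sum>k\<in>T. (case k of (n1, n2) \<Rightarrow> 1 / (real (max n1 n2))^2 * (cmod (G n1 n2))^2))"
    by (rule of_real_sum[symmetric])
  finally have "integral\<^sup>L steinhaus (\<lambda>\<omega>. (U_x f x \<omega>)^2) =
      (\<Sum>k\<in>T. (case k of (n1, n2) \<Rightarrow> 1 / (real (max n1 n2))^2 * (cmod (G n1 n2))^2))"
    by (simp only: of_real_eq_iff)
  then show ?thesis unfolding T_def G_def .
qed

end
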